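(* For all integers $n\geq 4$, with $x,y,z,y_1,y_2,z_1,z_2,\Phi,f$ as in the context, \[f(n)<\frac{\Phi(x-2y_1+z_2)\,(x^5-x^4-1)\,y^{14}\,(z_2z^4-z^4-1)}{x^7\,(y^{10}-2y_2y^8+y^8+2y_1y^4-2y^4+1)\,z_1z^6}<1.\]
   Context: Let $\mu(m)=\pi\sqrt{m}$. For an integer $n\geq 2$ put $x=\mu(n-1)$, $y=\mu(n)=\sqrt{x^2+\pi^2}$, $z=\mu(n+1)=\sqrt{x^2+2\pi^2}$, and \[f(n)=e^{x-2y+z}\,\frac{y^{14}(x^5-x^4-1)(z^5-z^4-1)}{x^7z^7(y^5-y^4+1)^2}.\] Define \begin{align*} y_2&=x+\frac{\pi^2}{2x}-\frac{\pi^4}{8x^3}+\frac{\pi^6}{16x^5}-\frac{5\pi^8}{128x^7}+\frac{7\pi^{10}}{256x^9},\qquad y_1=y_2-\frac{21\pi^{12}}{1024x^{11}},\\ z_2&=x+\frac{\pi^2}{x}-\frac{\pi^4}{2x^3}+\frac{\pi^6}{2x^5}-\frac{5\pi^8}{8x^7}+\frac{7\pi^{10}}{8x^9},\qquad z_1=z_2-\frac{21\pi^{12}}{16x^{11}}, \end{align*} and $\Phi(t)=1+t+\frac{t^2}{2}+\frac{t^3}{6}+\frac{t^4}{24}+\frac{t^5}{120}+\frac{t^6}{720}$. *)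

theory Defs
  imports Complex_Main
begin

definition mu :: "real \<Rightarrow> real" where
  "mu m = pi * sqrt m"

definition f3p4 :: "nat \<Rightarrow> real" where
  "f3p4 n = (let x = mu (real n - 1); y = mu (real n); z = mu (real n + 1) in
     exp (x - 2*y + z) * (y^14 * (x^5 - x^4 - 1) * (z^5 - z^4 - 1)) /
     (x^7 * z^7 * (y^5 - y^4 + 1)^2))"

definition y2_of :: "real \<Rightarrow> real" where
  "y2_of x = x + pi^2/(2*x) - pi^4/(8*x^3) + pi^6/(16*x^5) - 5*pi^8/(128*x^7) + 7*pi^10/(256*x^9)"

definition y1_of :: "real \<Rightarrow> real" where
  "y1_of x = y2_of x - 21*pi^12/(1024*x^11)"

definition z2_of :: "real \<Rightarrow> real" where
  "z2_of x = x + pi^2/x - pi^4/(2*x^3) + pi^6/(2*x^5) - 5*pi^8/(8*x^7) + 7*pi^10/(8*x^9)"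

definition z1_of :: "real \<Rightarrow> real" where
  "z1_of x = z2_of x - 21*pi^12/(16*x^11)"

definition Phi :: "real \<Rightarrow> real" where
  "Phi t = 1 + t + t^2/2 + t^3/6 + t^4/24 + t^5/120 + t^6/720"

definition bound3p4 :: "nat \<Rightarrow> real" where
  "bound3p4 n = (let x = mu (real n - 1); y = mu (real n); z = mu (real n + 1);
     y1 = y1_of x; y2 = y2_of x; z1 = z1_of x; z2 = z2_of x in
     Phi (x - 2*y1 + z2) * (x^5 - x^4 - 1) * y^14 * (z2 * z^4 - z^4 - 1) /
     (x^7 * (y^10 - 2*y2*y^8 + y^8 + 2*y1*y^4 - 2*y^4 + 1) * z1 * z^6))"

end

theory Submission
  imports Defs "HOL-Analysis.Complex_Transcendental"
begin


definition Yu :: "real \<Rightarrow> real" where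
  "Yu b = 1 + b/2 - b^2/8 + b^3/16 - 5*b^4/128 + 7*b^5/256"
definition Yl :: "real \<Rightarrow> real" where
  "Yl b = Yu b - 21*b^6/1024"

lemma Yu_sq: "Yu b ^2 - (1+b) = b^6 * (21/512 - 3*b/256 + 81*b^2/16384 - 35*b^3/16384 + 49*b^4/65536)"
  unfolding Yu_def by (simp add: power2_eq_square algebra_simps power_numeral_reduce)

lemma Yl_sq: "(1+b) - Yl b ^2 = b^7 * (33/1024 - 165*b/16384 + 77*b^2/16384 - 77*b^3/32768 + 147*b^4/131072 - 441*b^5/1048576)"
  unfolding Yl_def Yu_def by (simp add: power2_eq_square algebra_simps power_numeral_reduce)

lemma sqrt_poly_bounds:
  fixes b :: real assumes b: "0 < b" "b \<le> 2/3"
  shows "Yl b > 0" "Yl b ^2 < 1+b" "1+b < Yu b ^2"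
proof -
  have b2: "b^2 \<le> 4/9" proof - have "b^2 \<le> (2/3)^2" using b by (intro power_mono) auto thus ?thesis by (simp add: power_divide) qed
  have b3: "b^3 \<le> 8/27" proof - have "b^3 \<le> (2/3)^3" using b by (intro power_mono) auto thus ?thesis by (simp add: power_divide) qed
  have b5: "b^5 \<le> 32/243" proof - have "b^5 \<le> (2/3)^5" using b by (intro power_mono) auto thus ?thesis by (simp add: power_divide) qed
  have b4: "b^4 \<ge> 0" "b^2 \<ge> 0" "b^3 \<ge> 0" "b^5 \<ge> 0" "b^6 \<ge> 0" using b by simp_all
  have b6: "b^6 \<le> 64/729" proof - have "b^6 \<le> (2/3)^6" using b by (intro power_mono) auto thus ?thesis by (simp add: power_divide) qed
  have b4u: "b^4 \<le> 16/81" proof - have "b^4 \<le> (2/3)^4" using b by (intro power_mono) auto thus ?thesis by (simp add: power_divide) qed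
  have q2: "21/512 - 3*b/256 + 81*b^2/16384 - 35*b^3/16384 + 49*b^4/65536 > 0"
    using b b3 b4 by linarith
  have q1: "33/1024 - 165*b/16384 + 77*b^2/16384 - 77*b^3/32768 + 147*b^4/131072 - 441*b^5/1048576 > 0"
    using b b3 b4 b5 by linarith
  show "Yl b > 0" unfolding Yl_def Yu_def using b b2 b4 b4u b6 by linarith
  show "Yl b ^2 < 1+b" using Yl_sq[of b] q1 b by (smt (verit) mult_pos_pos zero_less_power)
  show "1+b < Yu b ^2" using Yu_sq[of b] q2 b by (smt (verit) mult_pos_pos zero_less_power)
qed

lemma exp_lt_Phi: assumes "t < (0::real)" shows "exp t < Phi t"
proof -
  obtain c where c: "exp t = (\<Sum>m<7. (t ^ m) / fact m) + (exp c / fact 7) * t ^ 7"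
    using Maclaurin_exp_le[of t 7] by blast
  have s: "(\<Sum>m<7. (t ^ m) / fact m) = Phi t"
    by (simp add: Phi_def eval_nat_numeral fact_numeral)
  have "t^7 < 0" using assms by (simp add: odd_pos power_less_zero_eq)
  hence "(exp c / fact 7) * t ^ 7 < 0" by (intro mult_pos_neg) auto
  thus ?thesis using c s by linarith
qed



lemma key_C:
  fixes x y z :: real
  assumes x: "x \<ge> 2" and z: "z \<ge> 2" and m: "2*y \<ge> x+z"
  shows "(x-1)*(z-1)*y^2 \<le> x*z*(y-1)^2"
proof -
  define m where "m = (x+z)/2"
  have ym: "y \<ge> m" using m m_def by simp
  have id1: "x*z*(y-1)^2 - (x-1)*(z-1)*y^2 = (x+z-1)*y^2 - 2*x*z*y + x*z"
    by (simp add: power2_eq_square algebra_simps)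
  have id2: "((x+z-1)*y^2 - 2*x*z*y + x*z) - ((x+z-1)*m^2 - 2*x*z*m + x*z)
      = (y-m)*((x+z-1)*(y+m) - 2*x*z)"
    by (simp add: power2_eq_square algebra_simps)
  have id3: "(x+z-1)*m^2 - 2*x*z*m + x*z = (x-z)^2*(2*m-1)/4"
    unfolding m_def by (simp add: power2_eq_square algebra_simps divide_simps) 
  have "(x+z-1)*(y+m) \<ge> (x+z-1)*(x+z)"
    using ym x z m_def by (intro mult_left_mono) auto
  moreover have "(x+z-1)*(x+z) \<ge> 2*x*z"
  proof -
    have "(x+z-1)*(x+z) - 2*x*z = x*(x-1) + z*(z-1)" by (simp add: algebra_simps)
    moreover have "x*(x-1) \<ge> 0" "z*(z-1) \<ge> 0" using x z by simp_all
    ultimately show ?thesis by linarith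
  qed
  ultimately have "(y-m)*((x+z-1)*(y+m) - 2*x*z) \<ge> 0" using ym by simp
  moreover have "(x-z)^2*(2*m-1)/4 \<ge> 0" using x z m_def by simp
  ultimately show ?thesis using id1 id2 id3 by linarith
qed

lemma key_core:
  fixes x y z :: real
  assumes x: "x \<ge> 5" and z: "z \<ge> 5" and y: "y \<ge> 5" and m: "2*y \<ge> x+z"
  shows "(x^5-x^4-1)*(z^5-z^4-1)*y^10 \<le> x^5*z^5*(y^5-y^4+1)^2"
proof -
  have C: "(x-1)*(z-1)*y^2 \<le> x*z*(y-1)^2" using key_C[OF _ _ m] x z by simp
  have x4: "x^4 \<ge> 625" using power_mono[OF x, of 4] by simp
  have z4: "z^4 \<ge> 625" using power_mono[OF z, of 4] by simp
  have X0: "0 \<le> x^5-x^4-1"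
  proof -
    have "x^5-x^4-1 = x^4*(x-1) - 1" by (simp add: algebra_simps power_numeral_reduce)
    moreover have "x^4*(x-1) \<ge> 625*4" using x4 x by (intro mult_mono) auto
    ultimately show ?thesis by linarith
  qed
  have Z0: "0 \<le> z^5-z^4-1"
  proof -
    have "z^5-z^4-1 = z^4*(z-1) - 1" by (simp add: algebra_simps power_numeral_reduce)
    moreover have "z^4*(z-1) \<ge> 625*4" using z4 z by (intro mult_mono) auto
    ultimately show ?thesis by linarith
  qed
  have X1: "x^5-x^4-1 \<le> x^4*(x-1)" by (simp add: algebra_simps power_numeral_reduce)
  have Z1: "z^5-z^4-1 \<le> z^4*(z-1)" by (simp add: algebra_simps power_numeral_reduce)
  have W1: "y^4*(y-1) \<le> y^5-y^4+1" by (simp add: algebra_simps power_numeral_reduce)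
  have W0: "0 \<le> y^4*(y-1)" using y by simp
  have W2: "(y^4*(y-1))^2 \<le> (y^5-y^4+1)^2" using W0 W1 by (intro power_mono) auto
  have "(x^5-x^4-1)*(z^5-z^4-1)*y^10 \<le> (x^4*(x-1))*(z^4*(z-1))*y^10"
    using X0 Z0 X1 Z1 x z by (intro mult_right_mono mult_mono) auto
  also have "\<dots> = x^4*z^4*y^8*((x-1)*(z-1)*y^2)" by (simp add: algebra_simps power_numeral_reduce)
  also have "\<dots> \<le> x^4*z^4*y^8*(x*z*(y-1)^2)"
    using C x z y by (intro mult_left_mono) auto
  also have "\<dots> = x^5*z^5*(y^4*(y-1))^2" by (simp add: algebra_simps power_numeral_reduce power2_eq_square)
  also have "\<dots> \<le> x^5*z^5*(y^5-y^4+1)^2"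
    using W2 x z by (intro mult_left_mono) auto
  finally show ?thesis .
qed



lemma key_II:
  fixes x y z y1 y2 z1 z2 E :: real
  assumes x: "x \<ge> 5" and yx: "y \<ge> x" and zx: "z \<ge> x" and m: "2*y \<ge> x+z"
    and yb: "y1 < y" "y < y2" and zb: "z1 < z" "z < z2"
    and ey: "y2 - y1 = 21/1024*x*E" and ez: "z2 - z1 = 21/16*x*E" and E: "0 \<le> E" "E \<le> 1/729"
  shows "(x^5-x^4-1)*y^10*(z2*z^4-z^4-1)
     \<le> (1+5*E)*(x^5*(y^10 - 2*y2*y^8 + y^8 + 2*y1*y^4 - 2*y^4 + 1)*z1*z^4)"
    and "0 < y^10 - 2*y2*y^8 + y^8 + 2*y1*y^4 - 2*y^4 + 1"
    and "y^10 - 2*y2*y^8 + y^8 + 2*y1*y^4 - 2*y^4 + 1 < (y^5-y^4+1)^2"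
    and "0 < z1"
proof -
  define D where "D = y^10 - 2*y2*y^8 + y^8 + 2*y1*y^4 - 2*y^4 + 1"
  define W where "W = (y^5-y^4+1)^2"
  define Y where "Y = y^10"
  have y5: "y \<ge> 5" and z5: "z \<ge> 5" using x yx zx by linarith+
  have hW: "W - D = 2*y^8*(y2-y) + 2*y^4*(y-y1)"
    unfolding W_def D_def by (simp add: power2_eq_square algebra_simps power_numeral_reduce)
  have y48: "y^4 \<le> y^8" using y5 by (intro power_increasing) auto
  have y4p: "y^4 > 0" using y5 by simp
  have "2*y^4*(y-y1) \<le> 2*y^8*(y-y1)" using y48 yb by (intro mult_right_mono) auto
  hence WD1: "W - D \<le> 2*y^8*(y2-y1)" using hW by (simp add: algebra_simps)
  have WD2: "0 < W - D" using hW yb y4p by (simp add: add_pos_pos)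
  have xy2: "x \<le> y^2/5"
  proof -
    have "y*5 \<le> y*y" using y5 by (intro mult_left_mono) auto
    thus ?thesis using yx by (simp add: power2_eq_square)
  qed
  have "2*y^8*(y2-y1) = 2*y^8*(21/1024*x*E)" by (simp only: ey)
  also have "\<dots> = 21/512 * x * (y^8 * E)" by (simp add: algebra_simps)
  also have "\<dots> \<le> 21/512 * (y^2/5) * (y^8*E)" using xy2 E by (intro mult_right_mono mult_left_mono) auto
  also have "\<dots> = 21/2560 * Y * E" unfolding Y_def by (simp add: power_numeral_reduce algebra_simps)
  finally have WD3: "W - D \<le> 21/2560 * Y * E" using WD1 by linarith
  have y54: "y^4*(y-1) \<le> y^5-y^4+1" by (simp add: algebra_simps power_numeral_reduce)
  have "4/5*y^5 \<le> y^4*(y-1)"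
  proof -
    have "y^4*(y-1) - 4/5*y^5 = y^4*(y/5 - 1)" by (simp add: algebra_simps power_numeral_reduce)
    moreover have "y^4*(y/5-1) \<ge> 0" using y5 by simp
    ultimately show ?thesis by linarith
  qed
  hence "4/5*y^5 \<le> y^5-y^4+1" using y54 by linarith
  hence "(4/5*y^5)^2 \<le> W" unfolding W_def using y5 by (intro power_mono) auto
  hence Wlo: "16/25*Y \<le> W" unfolding Y_def by (simp add: power_mult_distrib power_numeral_reduce)
  have Ypos: "Y > 0" unfolding Y_def using y5 by simp
  have E1: "E \<le> 1/729" using E by simp
  have Dlo: "D \<ge> W - 21/2560*Y*E" using WD3 by linarith
  have Dpos: "D > 0"
  proof -
    have "21/2560*Y*E \<le> 21/2560*Y*(1/729)" using E Ypos by (intro mult_left_mono) auto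
    thus ?thesis using Dlo Wlo Ypos by linarith
  qed
  have dz: "z2 - z1 \<le> 21/16*z*E" using ez zx E by (simp add: mult_right_mono)
  have z1lo: "z1 \<ge> z*(1 - 21/16*E)" using dz zb by (simp add: algebra_simps)
  have zq: "z*(1 - 21/16*E) > 0"
  proof -
    have "21/16*E \<le> 21/16*(1/729)" using E by simp
    thus "z*(1 - 21/16*E) > 0" using z5 by (intro mult_pos_pos) auto
  qed
  have z1pos: "z1 > 0" using zq z1lo by linarith
  define X5 where "X5 = x^5-x^4-1"
  define Zt where "Zt = z^5-z^4-1"
  have core: "X5*Zt*Y \<le> x^5*z^5*W"
    unfolding X5_def Zt_def Y_def W_def using key_core[OF x z5 y5 m] by simp
  have X0: "0 \<le> X5" and X1: "X5 \<le> x^5"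
  proof -
    have x4: "x^4 \<ge> 625" using power_mono[OF x, of 4] by simp
    have "x^5-x^4-1 = x^4*(x-1) - 1" by (simp add: algebra_simps power_numeral_reduce)
    moreover have "x^4*(x-1) \<ge> 625*4" using x4 x by (intro mult_mono) auto
    ultimately show "0 \<le> X5" unfolding X5_def by linarith
    show "X5 \<le> x^5" unfolding X5_def using x4 by linarith
  qed
  have Zn: "z2*z^4-z^4-1 = Zt + (z2-z)*z^4" unfolding Zt_def by (simp add: algebra_simps power_numeral_reduce)
  have z4p: "z^4 > 0" using z5 by simp
  have "(z2-z)*z^4 \<le> (21/16*z*E)*z^4" using dz zb z4p by (intro mult_right_mono) auto
  hence "X5*Y*((z2-z)*z^4) \<le> x^5*Y*((21/16*z*E)*z^4)"
    using X0 X1 Ypos zb z4p x E z5 by (intro mult_mono) (auto intro!: mult_nonneg_nonneg)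
  hence LHS: "X5*Y*(z2*z^4-z^4-1) \<le> x^5*z^4*(z*W + 21/16*z*Y*E)"
    using core unfolding Zn by (simp add: algebra_simps power_numeral_reduce)
  define c where "c = (1+5*E)*(1-21/16*E)"
  have c1: "c \<ge> 1 + 18/5*E"
  proof -
    have "c = 1 + 59/16*E - 105/16*E*E" unfolding c_def by (simp add: field_simps)
    moreover have "105/16*E*E \<le> 105/16*(1/729)*E" using E by (intro mult_right_mono) auto
    ultimately show ?thesis using E by linarith
  qed
  have c2: "c \<le> 2"
  proof -
    have "c = 1 + 59/16*E - 105/16*E*E" unfolding c_def by (simp add: field_simps)
    moreover have "E*E \<ge> 0" by simp
    ultimately show ?thesis using E by linarith
  qed
  have Dm: "W - 21/2560*Y*E \<ge> 0"
  proof -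
    have "21/2560*Y*E \<le> 21/2560*Y*(1/729)" using E Ypos by (intro mult_left_mono) auto
    thus ?thesis using Wlo Ypos by linarith
  qed
  have cw: "c*(W - 21/2560*Y*E) \<ge> W + 21/16*Y*E"
  proof -
    have a1: "c*(W - 21/2560*Y*E) \<ge> (1 + 18/5*E)*(W - 21/2560*Y*E)"
      using c1 Dm by (intro mult_right_mono) auto
    have a2: "(1 + 18/5*E)*(W - 21/2560*Y*E) = W - 21/2560*(Y*E) + 18/5*(E*W) - 18/5*21/2560*(E*(Y*E))"
      by (simp add: algebra_simps)
    have a3': "E*W \<ge> E*(16/25*Y)" using Wlo E by (intro mult_left_mono) auto
    have a3: "E*W \<ge> 16/25*(Y*E)" using a3' by (simp add: algebra_simps)
    have a4: "E*(Y*E) \<le> (1/729)*(Y*E)" using E Ypos by (intro mult_right_mono) auto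
    have "Y*E \<ge> 0" using Ypos E by simp
    thus ?thesis using a1 a2 a3 a4 by linarith
  qed
  have "(1+5*E)*(x^5*D*z1*z^4) \<ge> (1+5*E)*(x^5*(W - 21/2560*Y*E)*(z*(1 - 21/16*E))*z^4)"
  proof -
    have "(W - 21/2560*Y*E)*(z*(1 - 21/16*E)) \<le> D*z1"
      using Dlo z1lo Dm z1pos zq by (intro mult_mono) auto
    hence "x^5*((W - 21/2560*Y*E)*(z*(1 - 21/16*E)))*z^4 \<le> x^5*(D*z1)*z^4"
      using x z4p by (intro mult_right_mono mult_left_mono) auto
    thus ?thesis using E by (intro mult_left_mono) (auto simp: algebra_simps)
  qed
  also have "(1+5*E)*(x^5*(W - 21/2560*Y*E)*(z*(1 - 21/16*E))*z^4) = x^5*z^4*(z*(c*(W - 21/2560*Y*E)))"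
    unfolding c_def by (simp only: mult_ac)
  finally have RHS: "(1+5*E)*(x^5*D*z1*z^4) \<ge> x^5*z^4*(z*(c*(W - 21/2560*Y*E)))" .
  have "x^5*z^4*(z*W + 21/16*z*Y*E) \<le> x^5*z^4*(z*(c*(W - 21/2560*Y*E)))"
  proof -
    have "z*W + 21/16*z*Y*E = z*(W + 21/16*Y*E)" by (simp add: algebra_simps)
    also have "\<dots> \<le> z*(c*(W - 21/2560*Y*E))" using cw z5 by (intro mult_left_mono) auto
    finally show ?thesis using x z4p by (intro mult_left_mono) auto
  qed
  with LHS RHS show "(x^5-x^4-1)*y^10*(z2*z^4-z^4-1)
     \<le> (1+5*E)*(x^5*(y^10 - 2*y2*y^8 + y^8 + 2*y1*y^4 - 2*y^4 + 1)*z1*z^4)"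
    unfolding X5_def Y_def D_def by linarith
  show "0 < y^10 - 2*y2*y^8 + y^8 + 2*y1*y^4 - 2*y^4 + 1" using Dpos D_def by simp
  show "y^10 - 2*y2*y^8 + y^8 + 2*y1*y^4 - 2*y^4 + 1 < (y^5-y^4+1)^2" using WD2 D_def W_def by simp
  show "0 < z1" by (rule z1pos)
qed



lemma scalar_part:
  fixes s a t :: real
  assumes s: "0 < s" and a: "a = s^2" "a \<le> 1/3"
    and t: "t = pi*(s*a)*(-1/4 + 3*a/8 - 35*a^2/64 + 105*a^3/128 + 21*a^4/512)"
  shows "t < 0" "Phi t * (1 + 5*a^6) * (1+a)^2 < 1 + 2*a"
proof -
  have pa: "157/50 \<le> pi" "pi \<le> 3927/1250" using pi_approx by simp_all
  have a0: "a > 0" using a s by simp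
  define K where "K = -1/4 + 3*a/8 - 35*a^2/64 + 105*a^3/128 + 21*a^4/512"
  define Kt where "Kt = -1/4 + 3*a/8 - 13*a^2/50"
  have a2: "a^2 \<le> 1/9" proof - have "a^2 \<le> (1/3)^2" using a a0 by (intro power_mono) auto
    thus ?thesis by (simp add: power_divide) qed
  have a3: "a^3 \<ge> 0" "a^4 \<ge> 0" "a^2 \<ge> 0" using a0 by simp_all
  have Klo: "K \<ge> -1/4"
  proof -
    have "K + 1/4 = a*(3/8 - 35*a/64) + 105*a^3/128 + 21*a^4/512" unfolding K_def
      by (simp add: algebra_simps power2_eq_square)
    moreover have "a*(3/8 - 35*a/64) \<ge> 0" using a a0 by simp
    ultimately show ?thesis using a3 by linarith
  qed
  have Kup: "K \<le> Kt"
  proof -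
    have "Kt - K = a^2*(35/64 - 13/50 - 105*a/128 - 21*a^2/512)" unfolding K_def Kt_def
      by (simp add: algebra_simps power_numeral_reduce)
    moreover have "35/64 - 13/50 - 105*a/128 - 21*a^2/512 \<ge> 0" using a a2 by linarith
    ultimately show ?thesis using a3 by (metis diff_ge_0_iff_ge mult_nonneg_nonneg)
  qed
  have Ktneg: "Kt \<le> -1/8" unfolding Kt_def using a a3 by linarith
  have slt: "s < (2887/5000)"
  proof -
    have "s^2 \<le> 1/3" using a by simp
    hence "s^2 < (2887/5000)^2" by (simp add: power2_eq_square)
    thus ?thesis by (rule power_less_imp_less_base) (use s in simp)
  qed
  have s3: "s*a \<le> (2887/5000)/3"
  proof -
    have "s*a \<le> (2887/5000)*a" using slt a0 by (intro mult_right_mono) simp_all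
    thus ?thesis using a(2) by linarith
  qed
  have s3p: "s*a > 0" using s a0 by simp
  have teq: "t = pi*(s*a)*K" unfolding t K_def by (rule refl)
  have tlo: "t \<ge> -(4/25)"
  proof -
    have h1: "pi*(s*a)*K \<ge> pi*(s*a)*(-1/4)" using Klo s3p by (intro mult_left_mono) simp_all
    have h2: "pi*(s*a) \<le> (3927/1250)*((2887/5000)/3)" using pa s3 s3p by (intro mult_mono) simp_all
    have h3: "pi*(s*a)*(-1/4) = -(pi*(s*a))/4" by simp
    show ?thesis using teq h1 h2 h3 by linarith
  qed
  have tup: "t \<le> (157/50)*(s*a)*Kt"
  proof -
    have "pi*(s*a)*K \<le> pi*(s*a)*Kt" using Kup s3p by (intro mult_left_mono) auto
    moreover have "pi*(s*a)*Kt \<le> (157/50)*(s*a)*Kt"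
      using pa s3p Ktneg by (intro mult_right_mono_neg mult_right_mono) auto
    ultimately show ?thesis using teq by linarith
  qed
  have tneg: "t < 0"
  proof -
    have "(157/50)*(s*a)*Kt < 0" using s3p Ktneg by (simp add: mult_pos_neg)
    thus ?thesis using tup by linarith
  qed
  thus "t < 0" .
  have Phi1: "Phi t \<le> 1 + t + t^2/2"
  proof -
    have "Phi t - (1 + t + t^2/2) = t^3*(1/6 + t/24) + t^5*(1/120 + t/720)"
      unfolding Phi_def by (simp add: algebra_simps power_numeral_reduce power2_eq_square)
    moreover have "t^3*(1/6 + t/24) \<le> 0" using tneg tlo
      by (intro mult_nonpos_nonneg) (auto simp: power_le_zero_eq)
    moreover have "t^5*(1/120 + t/720) \<le> 0" using tneg tlo
      by (intro mult_nonpos_nonneg) (auto simp: power_le_zero_eq)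
    ultimately show ?thesis by linarith
  qed
  have "t^2/2 \<le> -(2/25)*t"
  proof -
    have "t*(t/2) \<le> t*(-(2/25))" using tneg tlo by (intro mult_left_mono_neg) auto
    thus ?thesis by (simp add: power2_eq_square)
  qed
  hence Phi2: "Phi t \<le> 1 + (23/25)*((157/50)*(s*a)*Kt)" using Phi1 tup by linarith
  have Phipos: "Phi t > 0" using exp_lt_Phi[OF tneg] exp_gt_zero[of t] by linarith
  define P where "P = 1 + 2*a + 6/5*a^2"
  have P0: "P > 0" unfolding P_def using a0 a3 by linarith
  have eP: "(1 + 5*a^6)*(1+a)^2 \<le> P"
  proof -
    have a4: "a^4 \<le> 1/81" proof - have "a^4 \<le> (1/3)^4" using a a0 by (intro power_mono) auto
      thus ?thesis by (simp add: power_divide) qed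
    have sq: "(1+a)^2 \<le> 16/9" proof - have "(1+a)^2 \<le> (4/3)^2" using a a0 by (intro power_mono) auto
      thus ?thesis by (simp add: power_divide) qed
    have "5*a^4*(1+a)^2 \<le> 5*(1/81)*(16/9)" using a4 sq a3 by (intro mult_mono) auto
    hence "a^2*(5*a^4*(1+a)^2) \<le> a^2*(1/5)" using a3 by (intro mult_left_mono) auto
    moreover have "(1 + 5*a^6)*(1+a)^2 = (1+a)^2 + a^2*(5*a^4*(1+a)^2)"
      by (simp add: algebra_simps power_numeral_reduce)
    moreover have "(1+a)^2 = 1 + 2*a + a^2" by (simp add: power2_eq_square algebra_simps)
    moreover have "6/5*((3/5)*(s*a)) = 18/25*(s*a)" by simp
    moreover have "(3611/1250)*(s*a)*(-1/4) = -(3611/5000)*(s*a)" by simp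
    ultimately show ?thesis unfolding P_def using s3p by linarith
  qed
  have KP: "Kt*P \<le> -1/4"
  proof -
    have "-Kt*P - 1/4 = a*(1/8 - 19/100*a) + 7/100*a^3 + 39/125*a^4" unfolding Kt_def P_def
      by (simp add: algebra_simps power_numeral_reduce power2_eq_square)
    moreover have "a*(1/8 - 19/100*a) \<ge> 0" using a a0 by simp
    ultimately show ?thesis using a3 by linarith
  qed
  have "Phi t * (1 + 5*a^6) * (1+a)^2 = Phi t * ((1 + 5*a^6)*(1+a)^2)" by simp
  also have "\<dots> \<le> Phi t * P" using eP Phipos by (intro mult_left_mono) auto
  also have "\<dots> \<le> (1 + (23/25)*((157/50)*(s*a)*Kt)) * P" using Phi2 P0 by (intro mult_right_mono) auto
  also have "\<dots> = P + (3611/1250)*(s*a)*(Kt*P)" by (simp add: algebra_simps)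
  also have "\<dots> \<le> P + (3611/1250)*(s*a)*(-1/4)" using KP s3p by (intro add_left_mono mult_left_mono) auto
  also have "\<dots> < 1 + 2*a"
  proof -
    have "6/5*a^2 = 6/5*(s*(s*a))" using a by (simp add: power2_eq_square power_numeral_reduce)
    moreover have "6/5*(s*(s*a)) < 6/5*((3/5)*(s*a))" using slt s3p by (intro mult_strict_left_mono mult_strict_right_mono) auto
    moreover have "6/5*((3/5)*(s*a)) = 18/25*(s*a)" by simp
    moreover have "(3611/1250)*(s*a)*(-1/4) = -(3611/5000)*(s*a)" by simp
    ultimately show ?thesis unfolding P_def using s3p by linarith
  qed
  finally show "Phi t * (1 + 5*a^6) * (1+a)^2 < 1 + 2*a" .
qed



lemma of_defs:
  fixes x a :: real
  assumes x: "x > 0" and a: "a = (pi/x)^2"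
  shows "y2_of x = x * Yu a" "y1_of x = x * Yl a" "z2_of x = x * Yu (2*a)" "z1_of x = x * Yl (2*a)"
proof -
  define s where "s = pi/x"
  have pe: "pi = s*x" using x s_def by simp
  have ae: "a = s^2" using a s_def by simp
  show "y2_of x = x * Yu a" unfolding y2_of_def Yu_def ae pe using x
    by (simp add: field_simps power_mult_distrib power_numeral_reduce)
  show "y1_of x = x * Yl a" unfolding y1_of_def y2_of_def Yl_def Yu_def ae pe using x
    by (simp add: field_simps power_mult_distrib power_numeral_reduce)
  show "z2_of x = x * Yu (2*a)" unfolding z2_of_def Yu_def ae pe using x
    by (simp add: field_simps power_mult_distrib power_numeral_reduce)
  show "z1_of x = x * Yl (2*a)" unfolding z1_of_def z2_of_def Yl_def Yu_def ae pe using x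
    by (simp add: field_simps power_mult_distrib power_numeral_reduce)
qed

lemma main_real:
  fixes x y z :: real
  assumes x: "x > 0" "3*pi^2 \<le> x^2" and y: "y > 0" "y^2 = x^2 + pi^2"
    and z: "z > 0" "z^2 = x^2 + 2*pi^2"
  shows "exp (x - 2*y + z) * (y^14 * (x^5 - x^4 - 1) * (z^5 - z^4 - 1)) / (x^7 * z^7 * (y^5 - y^4 + 1)^2)
      < Phi (x - 2*y1_of x + z2_of x) * (x^5 - x^4 - 1) * y^14 * (z2_of x * z^4 - z^4 - 1) /
        (x^7 * (y^10 - 2*y2_of x*y^8 + y^8 + 2*y1_of x*y^4 - 2*y^4 + 1) * z1_of x * z^6)"
   and "Phi (x - 2*y1_of x + z2_of x) * (x^5 - x^4 - 1) * y^14 * (z2_of x * z^4 - z^4 - 1) /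
        (x^7 * (y^10 - 2*y2_of x*y^8 + y^8 + 2*y1_of x*y^4 - 2*y^4 + 1) * z1_of x * z^6) < 1"
proof -
  define s where "s = pi/x"
  define a where "a = s^2"
  define y1 where "y1 = y1_of x"
  define y2 where "y2 = y2_of x"
  define z1 where "z1 = z1_of x"
  define z2 where "z2 = z2_of x"
  define E where "E = a^6"
  have s0: "s > 0" using x s_def by simp
  have pe: "pi = s*x" using x s_def by simp
  have xa: "x^2*a = pi^2" unfolding a_def pe by (simp add: power_mult_distrib)
  have a0: "a > 0" using s0 a_def by simp
  have a3: "a \<le> 1/3"
  proof -
    have "3*(x^2*a) \<le> x^2" using xa x by simp
    hence "x^2*(3*a) \<le> x^2*1" by (simp add: algebra_simps)
    moreover have "x^2 > 0" using x by simp
    ultimately have "3*a \<le> 1" by (simp only: mult_le_cancel_left_pos)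
    thus ?thesis by simp
  qed
  have defs: "y2 = x * Yu a" "y1 = x * Yl a" "z2 = x * Yu (2*a)" "z1 = x * Yl (2*a)"
    using of_defs[OF x(1), of a] a_def s_def y1_def y2_def z1_def z2_def by simp_all
  have y2a: "y^2 = x^2*(1+a)" using y xa by (simp add: algebra_simps)
  have z2a: "z^2 = x^2*(1+2*a)" using z xa by (simp add: algebra_simps)
  have sb: "x * Yl b < v \<and> v < x * Yu b" if b: "0 < b" "b \<le> 2/3" and v: "v > 0" "v^2 = x^2*(1+b)" for b v
  proof -
    note B = sqrt_poly_bounds[OF b]
    have x2: "x^2 > 0" using x by simp
    have "x^2 * (Yl b)^2 < x^2*(1+b)" using B(2) x2 by (rule mult_strict_left_mono)
    hence "(x * Yl b)^2 < v^2" using v(2) by (simp add: power_mult_distrib)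
    hence l: "x * Yl b < v" by (rule power_less_imp_less_base) (use v in simp)
    have "x^2*(1+b) < x^2 * (Yu b)^2" using B(3) x2 by (rule mult_strict_left_mono)
    hence "v^2 < (x * Yu b)^2" using v(2) by (simp add: power_mult_distrib)
    moreover have "x * Yu b \<ge> 0"
    proof -
      have "b^6 > 0" using b by simp
      hence "Yu b > 0" using B(1) unfolding Yl_def by linarith
      thus ?thesis using x by simp
    qed
    ultimately have "v < x * Yu b" by (rule power_less_imp_less_base)
    with l show ?thesis by simp
  qed
  have yb: "y1 < y" "y < y2" using sb[of a y] a0 a3 y y2a defs by auto
  have zb: "z1 < z" "z < z2" using sb[of "2*a" z] a0 a3 z z2a defs by auto
  have ey: "y2 - y1 = 21/1024*x*E" unfolding defs E_def Yl_def by (simp add: algebra_simps)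
  have ez: "z2 - z1 = 21/16*x*E" unfolding defs E_def Yl_def by (simp add: algebra_simps power_mult_distrib)
  have E0: "0 \<le> E" "E \<le> 1/729"
  proof -
    show "0 \<le> E" unfolding E_def using a0 by simp
    have "a^6 \<le> (1/3)^6" using a0 a3 by (intro power_mono) auto
    thus "E \<le> 1/729" unfolding E_def by (simp add: power_divide)
  qed
  have pa: "157/50 \<le> pi" using pi_approx by simp
  have x5: "x \<ge> 5"
  proof -
    have "pi^2 \<ge> (157/50)^2" using pa by (intro power_mono) auto
    hence "(5::real)^2 \<le> x^2" using x(2) by (simp add: power2_eq_square)
    thus ?thesis by (rule power2_le_imp_le) (use x in simp)
  qed
  have "x^2 \<le> y^2" using y(2) by simp
  hence yx: "x \<le> y" by (rule power2_le_imp_le) (use y in simp)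
  have "x^2 \<le> z^2" using z(2) by simp
  hence zx: "x \<le> z" by (rule power2_le_imp_le) (use z in simp)
  have m: "x+z \<le> 2*y"
  proof -
    have "0 \<le> (x-z)^2" by simp
    hence "2*x*z \<le> x^2 + z^2" by (simp add: power2_eq_square algebra_simps)
    moreover have "(x+z)^2 = x^2 + z^2 + 2*x*z" by (simp add: power2_eq_square algebra_simps)
    moreover have "(2*y)^2 = 4*y^2" by (simp add: power2_eq_square)
    ultimately have "(x+z)^2 \<le> (2*y)^2" using y(2) z(2) by linarith
    thus ?thesis by (rule power2_le_imp_le) (use y in simp)
  qed
  note II = key_II[OF x5 yx zx m yb zb ey ez E0]
  define tp where "tp = x - 2*y1 + z2"
  have tpe: "tp = pi*(s*a)*(-1/4 + 3*a/8 - 35*a^2/64 + 105*a^3/128 + 21*a^4/512)"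
  proof -
    have "tp = x*a^2*(-1/4 + 3*a/8 - 35*a^2/64 + 105*a^3/128 + 21*a^4/512)"
      unfolding tp_def defs Yl_def Yu_def by (simp add: algebra_simps power_mult_distrib power_numeral_reduce)
    moreover have "x*a^2 = pi*(s*a)" unfolding pe a_def by (simp add: power_numeral_reduce)
    ultimately show ?thesis by simp
  qed
  note SC = scalar_part[OF s0 a_def a3 tpe]
  have Phipos: "Phi tp > 0" using exp_lt_Phi[OF SC(1)] exp_gt_zero[of tp] by linarith
  have tlt: "x - 2*y + z < tp" unfolding tp_def using yb zb by linarith
  have eP: "exp (x - 2*y + z) < Phi tp" using exp_lt_Phi[OF SC(1)] tlt by (meson exp_less_mono less_trans)
  define X5 where "X5 = x^5 - x^4 - 1"
  define Zt where "Zt = z^5 - z^4 - 1"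
  define Zn where "Zn = z2 * z^4 - z^4 - 1"
  define W where "W = (y^5 - y^4 + 1)^2"
  define D where "D = y^10 - 2*y2*y^8 + y^8 + 2*y1*y^4 - 2*y^4 + 1"
  have Dp: "D > 0" "D < W" "z1 > 0" using II(2,3,4) D_def W_def by simp_all
  have X5p: "X5 > 0"
  proof -
    have x4: "x^4 \<ge> 625" using power_mono[OF x5, of 4] by simp
    have "x^5-x^4-1 = x^4*(x-1) - 1" by (simp add: algebra_simps power_numeral_reduce)
    moreover have "x^4*(x-1) \<ge> 625*4" using x4 x5 by (intro mult_mono) auto
    ultimately show ?thesis unfolding X5_def by linarith
  qed
  have Ztp: "Zt > 0"
  proof -
    have z5: "z \<ge> 5" using x5 zx by linarith
    have z4: "z^4 \<ge> 625" using power_mono[OF z5, of 4] by simp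
    have "z^5-z^4-1 = z^4*(z-1) - 1" by (simp add: algebra_simps power_numeral_reduce)
    moreover have "z^4*(z-1) \<ge> 625*4" using z4 z5 by (intro mult_mono) auto
    ultimately show ?thesis unfolding Zt_def by linarith
  qed
  have ZtZn: "Zt < Zn"
  proof -
    have "Zn - Zt = (z2 - z)*z^4" unfolding Zn_def Zt_def by (simp add: algebra_simps power_numeral_reduce)
    moreover have "(z2 - z)*z^4 > 0" using zb z by simp
    ultimately show ?thesis by linarith
  qed
  have Wp: "W > 0" using Dp by linarith
  define C where "C = y^14*X5/x^7"
  have Cp: "C > 0" unfolding C_def using X5p x y by simp
  have f_eq: "exp (x - 2*y + z) * (y^14 * X5 * Zt) / (x^7 * z^7 * W) = exp (x - 2*y + z) * C * (Zt/(z^7*W))"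
    unfolding C_def using x z Wp by (simp add: field_simps)
  have b_eq: "Phi tp * X5 * y^14 * Zn / (x^7 * D * z1 * z^6) = Phi tp * C * (Zn/(z1*z^6*D))"
    unfolding C_def using x z Dp by (simp add: field_simps)
  have q1: "Zt/(z^7*W) < Zn/(z^7*W)" using ZtZn z Wp by (intro divide_strict_right_mono) auto
  have q2: "Zn/(z^7*W) \<le> Zn/(z1*z^6*D)"
  proof (rule frac_le)
    show "0 \<le> Zn" using ZtZn Ztp by linarith
    show "0 < z1*z^6*D" using Dp z by simp
    have "z1*D \<le> z*W" using Dp zb z by (intro mult_mono) auto
    hence "z^6*(z1*D) \<le> z^6*(z*W)" using z by (intro mult_left_mono) auto
    thus "z1*z^6*D \<le> z^7*W" by (simp add: algebra_simps power_numeral_reduce)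
  qed simp
  have q0: "Zt/(z^7*W) > 0" using Ztp z Wp by simp
  have "exp (x - 2*y + z) * C * (Zt/(z^7*W)) < Phi tp * C * (Zn/(z1*z^6*D))"
  proof -
    have h1: "exp (x - 2*y + z) * C < Phi tp * C" using eP Cp by simp
    have h2: "Zt/(z^7*W) < Zn/(z1*z^6*D)" using q1 q2 by linarith
    have h3: "0 < Phi tp * C" using Phipos Cp by simp
    show ?thesis by (rule mult_strict_mono[OF h1 h2 h3 less_imp_le[OF q0]])
  qed
  thus "exp (x - 2*y + z) * (y^14 * (x^5 - x^4 - 1) * (z^5 - z^4 - 1)) / (x^7 * z^7 * (y^5 - y^4 + 1)^2)
      < Phi (x - 2*y1_of x + z2_of x) * (x^5 - x^4 - 1) * y^14 * (z2_of x * z^4 - z^4 - 1) /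
        (x^7 * (y^10 - 2*y2_of x*y^8 + y^8 + 2*y1_of x*y^4 - 2*y^4 + 1) * z1_of x * z^6)"
    using f_eq b_eq unfolding X5_def Zt_def W_def Zn_def D_def tp_def y1_def y2_def z1_def z2_def by simp
  define M where "M = x^5*D*z1*z^4"
  have Mp: "M > 0" unfolding M_def using x Dp z by simp
  have G: "Phi tp * (1+5*E) * y^4 < x^2*z^2"
  proof -
    have "y^4 = x^4*(1+a)^2" using y2a by (metis power2_eq_square power_mult_distrib numeral_Bit0 power_add)
    moreover have "x^2*z^2 = x^4*(1+2*a)" using z2a by (simp add: power_numeral_reduce)
    moreover have "x^4*(Phi tp * (1+5*E) * (1+a)^2) < x^4*(1+2*a)"
      using SC(2) x unfolding E_def by simp
    ultimately show ?thesis by (simp add: algebra_simps)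
  qed
  have "Phi tp * X5 * y^14 * Zn = (Phi tp * y^4) * (X5 * y^10 * Zn)" by (simp add: algebra_simps power_numeral_reduce)
  also have "\<dots> \<le> (Phi tp * y^4) * ((1+5*E) * M)"
    using II(1) Phipos y unfolding X5_def Zn_def M_def D_def by (intro mult_left_mono) auto
  also have "\<dots> = (Phi tp * (1+5*E) * y^4) * M" by simp
  also have "\<dots> < (x^2*z^2) * M" using G Mp by simp
  also have "\<dots> = x^7 * D * z1 * z^6" unfolding M_def by (simp add: algebra_simps power_numeral_reduce)
  finally have "Phi tp * X5 * y^14 * Zn < x^7 * D * z1 * z^6" .
  moreover have "x^7 * D * z1 * z^6 > 0" using x Dp z by simp
  ultimately have "Phi tp * X5 * y^14 * Zn / (x^7 * D * z1 * z^6) < 1" by simp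
  thus "Phi (x - 2*y1_of x + z2_of x) * (x^5 - x^4 - 1) * y^14 * (z2_of x * z^4 - z^4 - 1) /
        (x^7 * (y^10 - 2*y2_of x*y^8 + y^8 + 2*y1_of x*y^4 - 2*y^4 + 1) * z1_of x * z^6) < 1"
    unfolding X5_def Zn_def D_def tp_def y1_def y2_def z1_def z2_def by simp
qed


theorem lemma3p4:
  fixes n :: nat
  assumes "n \<ge> 4"
  shows "f3p4 n < bound3p4 n \<and> bound3p4 n < 1"
proof -
  define x where "x = mu (real n - 1)"
  define y where "y = mu (real n)"
  define z where "z = mu (real n + 1)"
  have n: "real n \<ge> 4" using assms by simp
  have x0: "x > 0" unfolding x_def mu_def using n by simp
  have y0: "y > 0" unfolding y_def mu_def using n by simp
  have z0: "z > 0" unfolding z_def mu_def using n by simp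
  have x2: "x^2 = pi^2 * (real n - 1)" unfolding x_def mu_def using n by (simp add: power_mult_distrib)
  have y2: "y^2 = pi^2 * real n" unfolding y_def mu_def using n by (simp add: power_mult_distrib)
  have z2: "z^2 = pi^2 * (real n + 1)" unfolding z_def mu_def using n by (simp add: power_mult_distrib)
  have hx: "3*pi^2 \<le> x^2"
  proof -
    have "pi^2 * 3 \<le> pi^2 * (real n - 1)" using n by (intro mult_left_mono) auto
    thus ?thesis using x2 by simp
  qed
  have hy: "y^2 = x^2 + pi^2" using x2 y2 by (simp add: algebra_simps)
  have hz: "z^2 = x^2 + 2*pi^2" using x2 z2 by (simp add: algebra_simps)
  note R = main_real[OF x0 hx y0 hy z0 hz]
  show ?thesis
    unfolding f3p4_def bound3p4_def Let_def using R unfolding x_def y_def z_def by simp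
qed

end
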